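(* Let $\mathcal W=\mathcal U\text{-}\sum_n\mathcal V_n$ be a sisnis ultrafilter on $\omega^2$. Then $\mathcal W$ has a basis consisting of sets in $\mathbb P$; that is, for every $A\in\mathcal W$ there is $B\subseteq A$ with $B\in\mathcal W\cap\mathbb P$.
   Context: Ultrafilters on countably infinite sets are assumed nonprincipal (containing all cofinite sets). An ultrafilter $\mathcal U$ on $\omega$ is selective if for every function $f$ on $\omega$ there is $A\in\mathcal U$ with $f\restriction A$ one-to-one or constant. For $A\subseteq\omega^2$ and $x\in\omega$, the (vertical) section is $A(x)=\{y\in\omega:\langle x,y\rangle\in A\}$. For ultrafilters $\mathcal U,\mathcal V_n$ on $\omega$, the sum $\mathcal U\text{-}\sum_n\mathcal V_n$ is the ultrafilter $\{A\subseteq\omega^2:\{n:A(n)\in\mathcal V_n\}\in\mathcal U\}$ on $\omega^2$. A sisnis ultrafilter is one of the form $\mathcal U\text{-}\sum_n\mathcal V_n$ where $\mathcal U$ and all $\mathcal V_n$ are selective ultrafilters on $\omega$ and, for $m\neq n$, there is no permutation $f$ of $\omega$ with $f(\mathcal V_m)=\mathcal V_n$ (here $f(\mathcal V)=\{B:f^{-1}(B)\in\mathcal V\}$). $\mathbb P$ is the set of all $A\subseteq\omega^2$ such that: (1) $A$ has infinitely many infinite sections and no nonempty finite sections; (2) the sections of $A$ are pairwise disjoint; (3) every $\langle x,y\rangle\in A$ has $x<y$; (4) for any $\langle x,y\rangle,\langle x',y'\rangle\in A$, $x\neq y'$. *)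

theory Defs
  imports Main
begin

text \<open>Ultrafilters on a countably infinite type, represented as sets of sets.
  By convention they are nonprincipal (contain all cofinite sets).\<close>

definition ultrafilter_on :: "'a set set \<Rightarrow> bool" where
  "ultrafilter_on U \<longleftrightarrow>
     UNIV \<in> U \<and> {} \<notin> U \<and>
     (\<forall>A B. A \<in> U \<and> A \<subseteq> B \<longrightarrow> B \<in> U) \<and>
     (\<forall>A B. A \<in> U \<and> B \<in> U \<longrightarrow> A \<inter> B \<in> U) \<and>
     (\<forall>A. A \<in> U \<or> - A \<in> U) \<and>
     (\<forall>A. finite (- A) \<longrightarrow> A \<in> U)"

definition selective :: "nat set set \<Rightarrow> bool" where
  "selective U \<longleftrightarrow> ultrafilter_on U \<and>
     (\<forall>f :: nat \<Rightarrow> nat. \<exists>A \<in> U. inj_on f A \<or> (\<exists>c. \<forall>x \<in> A. f x = c))"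

definition uf_image :: "('a \<Rightarrow> 'b) \<Rightarrow> 'a set set \<Rightarrow> 'b set set" where
  "uf_image f V = {B. f -` B \<in> V}"

definition vsection :: "(nat \<times> nat) set \<Rightarrow> nat \<Rightarrow> nat set" where
  "vsection A x = {y. (x, y) \<in> A}"

definition uf_sum :: "nat set set \<Rightarrow> (nat \<Rightarrow> nat set set) \<Rightarrow> (nat \<times> nat) set set" where
  "uf_sum U V = {A. {n. vsection A n \<in> V n} \<in> U}"

definition sisnis :: "nat set set \<Rightarrow> (nat \<Rightarrow> nat set set) \<Rightarrow> bool" where
  "sisnis U V \<longleftrightarrow> selective U \<and> (\<forall>n. selective (V n)) \<and>
     (\<forall>m n. m \<noteq> n \<longrightarrow> \<not> (\<exists>f. bij f \<and> uf_image f (V m) = V n))"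

definition PP :: "(nat \<times> nat) set set" where
  "PP = {A.
     infinite {x. infinite (vsection A x)} \<and>
     (\<forall>x. vsection A x \<noteq> {} \<longrightarrow> infinite (vsection A x)) \<and>
     (\<forall>x x'. x \<noteq> x' \<longrightarrow> vsection A x \<inter> vsection A x' = {}) \<and>
     (\<forall>x y. (x, y) \<in> A \<longrightarrow> x < y) \<and>
     (\<forall>x y x' y'. (x, y) \<in> A \<and> (x', y') \<in> A \<longrightarrow> x \<noteq> y')}"

end

theory Submission
  imports Defs
begin

lemma uf_mono: "ultrafilter_on F \<Longrightarrow> S \<in> F \<Longrightarrow> S \<subseteq> T \<Longrightarrow> T \<in> F"
  unfolding ultrafilter_on_def by blast
lemma uf_int: "ultrafilter_on F \<Longrightarrow> S \<in> F \<Longrightarrow> T \<in> F \<Longrightarrow> S \<inter> T \<in> F"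
  unfolding ultrafilter_on_def by blast
lemma uf_cof: "ultrafilter_on F \<Longrightarrow> finite (- S) \<Longrightarrow> S \<in> F"
  unfolding ultrafilter_on_def by blast
lemma uf_compl: "ultrafilter_on F \<Longrightarrow> S \<notin> F \<Longrightarrow> - S \<in> F"
  unfolding ultrafilter_on_def by blast
lemma uf_empty: "ultrafilter_on F \<Longrightarrow> {} \<notin> F"
  unfolding ultrafilter_on_def by blast
lemma uf_not_both: "ultrafilter_on F \<Longrightarrow> S \<in> F \<Longrightarrow> - S \<notin> F"
  using uf_int uf_empty by fastforce
lemma uf_inf: "ultrafilter_on F \<Longrightarrow> S \<in> F \<Longrightarrow> infinite S"
proof
  assume "ultrafilter_on F" "S \<in> F" "finite S"
  then show False using uf_cof[of F "- S"] uf_not_both[of F S] by simp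
qed

lemma uf_Inter0: "finite I \<Longrightarrow> ultrafilter_on F \<Longrightarrow> (\<forall>i\<in>I. S i \<in> F) \<longrightarrow> (\<Inter>i\<in>I. S i) \<in> F"
proof (induction I rule: finite_induct)
  case empty then show ?case unfolding ultrafilter_on_def by simp
next
  case (insert x I) then show ?case using uf_int[of F "S x" "\<Inter>i\<in>I. S i"] by simp
qed
lemma uf_Inter: "ultrafilter_on F \<Longrightarrow> finite I \<Longrightarrow> (\<forall>i\<in>I. S i \<in> F) \<Longrightarrow> (\<Inter>i\<in>I. S i) \<in> F"
  using uf_Inter0 by blast

lemma weakP:
  fixes p :: "nat set set" and q :: "nat \<Rightarrow> nat set set"
  assumes sp: "selective p" and uq: "\<forall>n. ultrafilter_on (q n)" and ne: "\<forall>n\<in>I. q n \<noteq> p"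
  shows "\<exists>A\<in>p. \<forall>n\<in>I. A \<notin> q n"
proof -
  have up: "ultrafilter_on p" using sp selective_def by blast
  have "\<forall>n. \<exists>S. S \<in> p \<and> (n \<in> I \<longrightarrow> S \<notin> q n)"
  proof
    fix n
    show "\<exists>S. S \<in> p \<and> (n \<in> I \<longrightarrow> S \<notin> q n)"
    proof (cases "n \<in> I")
      case False then show ?thesis using up unfolding ultrafilter_on_def by blast
    next
      case True
      then have "q n \<noteq> p" using ne by blast
      then obtain S where "(S \<in> q n \<and> S \<notin> p) \<or> (S \<in> p \<and> S \<notin> q n)" by blast
      then show ?thesis
      proof
        assume h: "S \<in> q n \<and> S \<notin> p"
        then have "- S \<in> p" using up uf_compl by blast
        moreover have "- S \<notin> q n" using h uq uf_not_both by blast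
        ultimately show ?thesis by blast
      qed blast
    qed
  qed
  then obtain A where A: "\<And>n. A n \<in> p \<and> (n \<in> I \<longrightarrow> A n \<notin> q n)" by metis
  define E where "E n = (\<Inter>k\<in>{..n}. A k)" for n
  have Ep: "E n \<in> p" for n unfolding E_def using uf_Inter[OF up] A by blast
  have EA: "E n \<subseteq> A n" for n unfolding E_def by auto
  have Emono: "k \<le> n \<Longrightarrow> E n \<subseteq> E k" for k n unfolding E_def by auto
  define f where "f x = (if \<forall>n. x \<in> E n then 0 else Suc (LEAST n. x \<notin> E n))" for x
  obtain B where B: "B \<in> p" and fB: "inj_on f B \<or> (\<exists>c. \<forall>x\<in>B. f x = c)"
    using sp unfolding selective_def by blast
  have notq: "B \<notin> q n" if nI: "n \<in> I" and fin: "finite (B - E n)" for n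
  proof
    assume "B \<in> q n"
    moreover have "- (B - E n) \<in> q n" using fin uq uf_cof[of "q n" "- (B - E n)"] by (simp add: Diff_eq)
    ultimately have "B \<inter> - (B - E n) \<in> q n" using uq uf_int by blast
    moreover have "B \<inter> - (B - E n) \<subseteq> A n" using EA by blast
    ultimately have "A n \<in> q n" using uq uf_mono by blast
    then show False using A nI by blast
  qed
  from fB show ?thesis
  proof
    assume inj: "inj_on f B"
    have "finite (B - E n)" for n
    proof -
      have "B - E n \<subseteq> f -` {1..Suc n} \<inter> B"
      proof
        fix x assume x: "x \<in> B - E n"
        then have nall: "\<not> (\<forall>m. x \<in> E m)" by blast
        have "(LEAST m. x \<notin> E m) \<le> n" using x by (simp add: Least_le)
        then show "x \<in> f -` {1..Suc n} \<inter> B" using x nall unfolding f_def by simp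
      qed
      moreover have "finite (f -` {1..Suc n} \<inter> B)" using finite_vimage_IntI inj by blast
      ultimately show ?thesis using finite_subset by blast
    qed
    then show ?thesis using B notq by blast
  next
    assume "\<exists>c. \<forall>x\<in>B. f x = c"
    then obtain c where c: "\<forall>x\<in>B. f x = c" by blast
    show ?thesis
    proof (cases c)
      case 0
      then have "B \<subseteq> E n" for n using c unfolding f_def by (auto split: if_splits)
      then have "finite (B - E n)" for n by (metis Diff_eq_empty_iff finite.emptyI)
      then show ?thesis using B notq by blast
    next
      case (Suc k)
      have "B \<inter> E k = {}"
      proof (rule ccontr)
        assume "B \<inter> E k \<noteq> {}"
        then obtain x where x: "x \<in> B" "x \<in> E k" by blast
        then have fx: "f x = Suc k" using c Suc by simp
        then have nall: "\<not> (\<forall>m. x \<in> E m)" unfolding f_def by (auto split: if_splits)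
        then have "(LEAST m. x \<notin> E m) = k" using fx unfolding f_def by (simp split: if_splits)
        then have "x \<notin> E k" using nall by (metis (mono_tags, lifting) LeastI)
        then show False using x by blast
      qed
      then have False using uf_int[OF up B Ep[of k]] uf_empty[OF up] by simp
      then show ?thesis ..
    qed
  qed
qed

theorem mainTheorem1:
  fixes U :: "nat set set" and V :: "nat \<Rightarrow> nat set set"
  assumes "sisnis U V"
  shows "\<forall>A \<in> uf_sum U V. \<exists>B. B \<subseteq> A \<and> B \<in> uf_sum U V \<and> B \<in> PP"
proof
  fix A assume A: "A \<in> uf_sum U V"
  have sU: "selective U" and sV: "\<And>n. selective (V n)"
    and ni: "\<And>m n. m \<noteq> n \<Longrightarrow> \<not> (\<exists>f. bij f \<and> uf_image f (V m) = V n)"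
    using assms unfolding sisnis_def by blast+
  have uU: "ultrafilter_on U" using sU selective_def by blast
  have uV: "\<forall>n. ultrafilter_on (V n)" using sV selective_def by blast
  have dist: "V m \<noteq> V n" if "m \<noteq> n" for m n
  proof
    assume "V m = V n"
    moreover have "uf_image id (V m) = V m" unfolding uf_image_def by simp
    ultimately show False using ni[OF that] bij_id by metis
  qed
  define X where "X = {n. vsection A n \<in> V n}"
  have XU: "X \<in> U" using A unfolding uf_sum_def X_def by simp
  have "\<forall>n. \<exists>C. C \<in> V n \<and> (\<forall>m\<in>-{n}. C \<notin> V m)"
  proof
    fix n
    show "\<exists>C. C \<in> V n \<and> (\<forall>m\<in>-{n}. C \<notin> V m)"
    proof -
      have "\<forall>m\<in>-{n}. V m \<noteq> V n" using dist by auto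
      then show ?thesis using weakP[OF sV[of n] uV, of "-{n}"] by blast
    qed
  qed
  then obtain C where C0: "\<forall>n. C n \<in> V n \<and> (\<forall>m\<in>-{n}. C n \<notin> V m)" by metis
  have C: "\<And>n. C n \<in> V n" "\<And>n m. m \<noteq> n \<Longrightarrow> C n \<notin> V m" using C0 by auto
  define D where "D n = C n \<inter> (\<Inter>m\<in>{..<n}. - C m)" for n
  have DV: "D n \<in> V n" for n
  proof -
    have u: "ultrafilter_on (V n)" using uV by blast
    have "\<forall>m\<in>{..<n}. - C m \<in> V n"
    proof
      fix m assume "m \<in> {..<n}"
      then have "m \<noteq> n" by simp
      then have "C m \<notin> V n" using C(2)[of n m] by simp
      then show "- C m \<in> V n" using uf_compl[OF u] by blast
    qed
    then have "(\<Inter>m\<in>{..<n}. - C m) \<in> V n"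
      using uf_Inter[OF u, of "{..<n}" "\<lambda>m. - C m"] by simp
    then show ?thesis unfolding D_def using uf_int[OF u C(1)[of n]] by blast
  qed
  have Dsub: "D m \<subseteq> C m" for m unfolding D_def by blast
  have Dsub2: "m < n \<Longrightarrow> D n \<subseteq> - C m" for m n unfolding D_def by blast
  have Ddisj: "m \<noteq> n \<Longrightarrow> D m \<inter> D n = {}" for m n
  proof (cases "m < n")
    case True
    then show ?thesis using Dsub[of m] Dsub2[of m n] by blast
  next
    case False
    assume "m \<noteq> n"
    then have "n < m" using False by simp
    then show ?thesis using Dsub[of n] Dsub2[of n m] by blast
  qed
  define J where "J = {n. V n \<noteq> U}"
  obtain Z where Z: "Z \<in> U" "\<forall>n\<in>J. Z \<notin> V n"
    using weakP[OF sU uV, of J] unfolding J_def by blast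
  have JU: "J \<in> U"
  proof -
    have "finite (- J)"
    proof (cases "\<exists>n. V n = U")
      case True
      then obtain n where "V n = U" by blast
      then have "- J \<subseteq> {n}" unfolding J_def using dist by auto
      then show ?thesis using finite_subset by blast
    next
      case False then have "- J = {}" unfolding J_def by auto
      then show ?thesis by simp
    qed
    then show ?thesis using uf_cof uU by blast
  qed
  define Y where "Y = X \<inter> Z \<inter> J"
  have YU: "Y \<in> U" unfolding Y_def using uf_int uU XU Z(1) JU by blast
  define B where "B = {(n,y). n \<in> Y \<and> y \<in> vsection A n \<and> y \<in> D n \<and> y \<notin> Z \<and> n < y}"
  have secB: "vsection B n = (if n \<in> Y then vsection A n \<inter> D n \<inter> - Z \<inter> {n<..} else {})" for n
    unfolding B_def vsection_def by auto
  have secBV: "vsection B n \<in> V n" if "n \<in> Y" for n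
  proof -
    have u: "ultrafilter_on (V n)" using uV by blast
    have "vsection A n \<in> V n" using that unfolding Y_def X_def by simp
    moreover have "- Z \<in> V n" using that Z(2) unfolding Y_def using uf_compl u by blast
    moreover have "{n<..} \<in> V n" using uf_cof[OF u] by (simp add: Compl_greaterThan)
    ultimately show ?thesis using secB that uf_int[OF u] DV by simp
  qed
  have "B \<subseteq> A" unfolding B_def vsection_def by auto
  moreover have "B \<in> uf_sum U V"
  proof -
    have "Y \<subseteq> {n. vsection B n \<in> V n}" using secBV by blast
    then show ?thesis unfolding uf_sum_def using uf_mono[OF uU YU] by blast
  qed
  moreover have "B \<in> PP"
  proof -
    have "Y \<subseteq> {x. infinite (vsection B x)}" using secBV uf_inf uV by blast
    then have p1: "infinite {x. infinite (vsection B x)}" using uf_inf[OF uU YU] finite_subset by blast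
    have p2: "\<forall>x. vsection B x \<noteq> {} \<longrightarrow> infinite (vsection B x)"
    proof (intro allI impI)
      fix x assume "vsection B x \<noteq> {}"
      then have "x \<in> Y" using secB[of x] by (auto split: if_splits)
      then show "infinite (vsection B x)" using secBV uf_inf uV by blast
    qed
    have p3: "\<forall>x x'. x \<noteq> x' \<longrightarrow> vsection B x \<inter> vsection B x' = {}"
      using Ddisj unfolding secB by auto
    have p4: "\<forall>x y. (x, y) \<in> B \<longrightarrow> x < y" unfolding B_def by auto
    have p5: "\<forall>x y x' y'. (x, y) \<in> B \<and> (x', y') \<in> B \<longrightarrow> x \<noteq> y'"
      unfolding B_def Y_def by auto
    show ?thesis unfolding PP_def using p1 p2 p3 p4 p5 by blast
  qed
  ultimately show "\<exists>B. B \<subseteq> A \<and> B \<in> uf_sum U V \<and> B \<in> PP" by blast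
qed

end
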